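(* Let $\ell\ge2$ be an integer and $d=2^\ell-1$. Then the $d$-dimensional hypercube $Q_d$ has a spanning 2-connected subgraph $H$ with $\mathsf{tvc}(H)\le 2\,(2^{d-\ell}+2^{d/2-\ell})$.
   Context: $Q_d$ is the graph on $\{0,1\}^d$ in which two vectors are adjacent iff they differ in exactly one coordinate. A total vertex cover of a graph $H$ is a set $S\subseteq V(H)$ that is a vertex cover (every edge has an endpoint in $S$) and a total dominating set (every vertex of $H$, including those in $S$, has a neighbour in $S$); $\mathsf{tvc}(H)$ is the minimum size of a total vertex cover. *)

theory Defs
  imports Complex_Main
begin

text \<open>The hypercube Q_d: vertices are the 0/1-vectors of length d, encoded as
subsets of the coordinate set {0..<d} (the support of the vector); two vertices
are adjacent iff they differ in exactly one coordinate.\<close>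

definition cube_verts :: "nat \<Rightarrow> nat set set" where
  "cube_verts d = Pow {..<d}"

definition cube_edges :: "nat \<Rightarrow> nat set set set" where
  "cube_edges d = {{x, y} | x y. x \<in> cube_verts d \<and> y \<in> cube_verts d
                       \<and> card ((x - y) \<union> (y - x)) = 1}"

definition spanning_subgraph_of_cube :: "nat \<Rightarrow> nat set set \<Rightarrow> nat set set set \<Rightarrow> bool" where
  "spanning_subgraph_of_cube d V E \<longleftrightarrow> V = cube_verts d \<and> E \<subseteq> cube_edges d"

definition connected_on :: "'a set set \<Rightarrow> 'a set \<Rightarrow> bool" where
  "connected_on E W \<longleftrightarrow> W \<noteq> {} \<and>
     (\<forall>u\<in>W. \<forall>v\<in>W. (\<lambda>a b. {a, b} \<in> E \<and> a \<in> W \<and> b \<in> W)\<^sup>*\<^sup>* u v)"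

definition two_connected :: "'a set \<Rightarrow> 'a set set \<Rightarrow> bool" where
  "two_connected V E \<longleftrightarrow> finite V \<and> card V \<ge> 3 \<and> connected_on E V \<and>
     (\<forall>v\<in>V. connected_on E (V - {v}))"

definition is_tvc :: "'a set \<Rightarrow> 'a set set \<Rightarrow> 'a set \<Rightarrow> bool" where
  "is_tvc V E S \<longleftrightarrow> S \<subseteq> V \<and> (\<forall>e\<in>E. e \<inter> S \<noteq> {}) \<and>
     (\<forall>v\<in>V. \<exists>u\<in>S. {v, u} \<in> E \<and> u \<noteq> v)"

definition tvc :: "'a set \<Rightarrow> 'a set set \<Rightarrow> nat" where
  "tvc V E = (LEAST k. \<exists>S. is_tvc V E S \<and> card S = k)"

end

theory Submission
  imports Defs
begin


definition flip :: "nat set \<Rightarrow> nat \<Rightarrow> nat set" where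
  "flip A j = (if j \<in> A then A - {j} else insert j A)"

definition sd :: "nat set \<Rightarrow> nat set \<Rightarrow> nat set" where
  "sd A B = (A - B) \<union> (B - A)"

definition vv :: "nat \<Rightarrow> nat set \<Rightarrow> nat set" where
  "vv m A = {i. i < m \<and> (i \<in> A) \<noteq> (m + 1 + i \<in> A)}"

definition yy :: "nat \<Rightarrow> nat set \<Rightarrow> nat set" where
  "yy m A = {i. i < m \<and> m + 1 + i \<in> A}"

lemma mem_flip[simp]: "x \<in> flip A j \<longleftrightarrow> (if x = j then j \<notin> A else x \<in> A)"
  by (auto simp: flip_def)

lemma mem_sd[simp]: "x \<in> sd A B \<longleftrightarrow> (x \<in> A) \<noteq> (x \<in> B)"
  by (auto simp: sd_def)

lemma flip_flip[simp]: "flip (flip A j) j = A"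
  by (auto simp: set_eq_iff)

lemma flip_neq[simp]: "flip A j \<noteq> A" "A \<noteq> flip A j"
  by (auto simp: set_eq_iff)

lemma flip_eq_flip_iff[simp]: "flip A i = flip A j \<longleftrightarrow> i = j"
proof
  assume "flip A i = flip A j"
  then have "(i \<in> flip A i) = (i \<in> flip A j)" by simp
  then show "i = j" by (auto split: if_splits)
qed simp

lemma flip_comm: "flip (flip A i) j = flip (flip A j) i"
  by (auto simp: set_eq_iff)

lemma flip_sub: "A \<subseteq> {..<n} \<Longrightarrow> j < n \<Longrightarrow> flip A j \<subseteq> {..<n}"
  by (auto split: if_splits)

lemma sd_flip: "sd (flip A j) B = flip (sd A B) j"
  by (auto simp: set_eq_iff)

lemma sd_comm: "sd A B = sd B A"
  by auto

lemma sd_self[simp]: "sd A A = {}"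
  by auto

lemma sd_empty_iff: "sd A B = {} \<longleftrightarrow> A = B"
  by auto

lemma sd_flip_self: "sd (flip A j) A = {j}"
  by (auto split: if_splits)

lemma finite_sd: "finite A \<Longrightarrow> finite B \<Longrightarrow> finite (sd A B)"
  by (simp add: sd_def)

lemma sd_tri: "sd A C \<subseteq> sd A B \<union> sd B C"
  by auto

lemma card_sd_tri:
  assumes "finite A" "finite B" "finite C"
  shows "card (sd A C) \<le> card (sd A B) + card (sd B C)"
proof -
  have "card (sd A C) \<le> card (sd A B \<union> sd B C)"
    by (rule card_mono[OF _ sd_tri]) (simp add: finite_sd assms)
  also have "\<dots> \<le> card (sd A B) + card (sd B C)" by (rule card_Un_le)
  finally show ?thesis .
qed

lemma card_flip_in: "finite X \<Longrightarrow> j \<in> X \<Longrightarrow> card (flip X j) = card X - 1"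
  by (simp add: flip_def)

lemma card_flip_notin: "finite X \<Longrightarrow> j \<notin> X \<Longrightarrow> card (flip X j) = card X + 1"
  by (simp add: flip_def)

lemma finite_flip[simp]: "finite (flip X j) = finite X"
  by (simp add: flip_def)

lemma cube_edge_flip:
  assumes "A \<subseteq> {..<n}" "j < n"
  shows "{A, flip A j} \<in> cube_edges n"
proof -
  have "card ((A - flip A j) \<union> (flip A j - A)) = 1"
  proof -
    have "(A - flip A j) \<union> (flip A j - A) = {j}" by (auto split: if_splits)
    then show ?thesis by simp
  qed
  moreover have "A \<in> cube_verts n" "flip A j \<in> cube_verts n"
    using assms flip_sub[OF assms] by (auto simp: cube_verts_def)
  ultimately show ?thesis unfolding cube_edges_def by (intro CollectI exI[of _ A] exI[of _ "flip A j"]) simp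
qed

lemma cube_edge_dist:
  assumes "{A, B} \<in> cube_edges n"
  shows "A \<subseteq> {..<n}" "B \<subseteq> {..<n}" "card (sd A B) = 1"
proof -
  obtain x y where xy: "{A, B} = {x, y}" "x \<in> cube_verts n" "y \<in> cube_verts n"
    "card ((x - y) \<union> (y - x)) = 1"
    using assms unfolding cube_edges_def by blast
  have c: "(A = x \<and> B = y) \<or> (A = y \<and> B = x)" using xy(1) by (simp add: doubleton_eq_iff)
  have e1: "sd x y = (x - y) \<union> (y - x)" by (simp add: sd_def)
  have e2: "sd y x = (x - y) \<union> (y - x)" by (simp add: sd_def Un_commute)
  from c show "A \<subseteq> {..<n}" using xy(2,3) unfolding cube_verts_def by blast
  from c show "B \<subseteq> {..<n}" using xy(2,3) unfolding cube_verts_def by blast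
  from c show "card (sd A B) = 1" using e1 e2 xy(4) by metis
qed

lemma card1_sd: "card (sd A B) = 1 \<Longrightarrow> \<exists>j. B = flip A j"
proof -
  assume "card (sd A B) = 1"
  then obtain j where j: "sd A B = {j}" by (auto simp: card_Suc_eq)
  have h: "x \<in> sd A B \<longleftrightarrow> x = j" for x using j by blast
  have "B = flip A j"
  proof (rule set_eqI)
    fix x show "x \<in> B \<longleftrightarrow> x \<in> flip A j"
      using h[of x] by (cases "x = j") auto
  qed
  then show ?thesis by blast
qed

lemma vv_flip_x: "j < m \<Longrightarrow> vv m (flip A j) = flip (vv m A) j"
  by (auto simp: vv_def set_eq_iff)

lemma vv_flip_mid: "vv m (flip A m) = vv m A"
  by (auto simp: vv_def set_eq_iff)

lemma vv_flip_y: "i < m \<Longrightarrow> vv m (flip A (m + 1 + i)) = flip (vv m A) i"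
  by (auto simp: vv_def set_eq_iff)

lemma yy_flip_x: "j < m \<Longrightarrow> yy m (flip A j) = yy m A"
  by (auto simp: yy_def set_eq_iff)

lemma yy_flip_mid: "yy m (flip A m) = yy m A"
  by (auto simp: yy_def set_eq_iff)

lemma yy_flip_y: "i < m \<Longrightarrow> yy m (flip A (m + 1 + i)) = flip (yy m A) i"
  by (auto simp: yy_def set_eq_iff)

lemma vv_sub: "vv m A \<subseteq> {..<m}"
  by (auto simp: vv_def)

lemma yy_sub: "yy m A \<subseteq> {..<m}"
  by (auto simp: yy_def)

lemma vv_low: "A \<subseteq> {..<m} \<Longrightarrow> vv m A = A"
  by (auto simp: vv_def)

lemma yy_low: "A \<subseteq> {..<m} \<Longrightarrow> yy m A = {}"
  by (auto simp: yy_def)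

lemma determ:
  assumes "A \<subseteq> {..<Suc (2*m)}" "B \<subseteq> {..<Suc (2*m)}"
    "A \<inter> {..<m} = B \<inter> {..<m}" "vv m A = vv m B" "(m \<in> A) = (m \<in> B)"
  shows "A = B"
proof (rule set_eqI)
  fix j show "j \<in> A \<longleftrightarrow> j \<in> B"
  proof (cases "j < m")
    case True then show ?thesis using assms(3) by auto
  next
    case False
    show ?thesis
    proof (cases "j = m")
      case True then show ?thesis using assms(5) by simp
    next
      case False
      show ?thesis
      proof (cases "j < Suc (2*m)")
        case True
        define i where "i = j - Suc m"
        have i: "i < m" "j = m + 1 + i" using True False \<open>\<not> j < m\<close> by (auto simp: i_def)
        have "i \<in> vv m A \<longleftrightarrow> i \<in> vv m B" using assms(4) by simp
        moreover have "i \<in> A \<longleftrightarrow> i \<in> B" using assms(3) i by auto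
        ultimately show ?thesis using i by (auto simp: vv_def)
      next
        case False then show ?thesis using assms(1,2) by auto
      qed
    qed
  qed
qed



definition dd :: "nat \<Rightarrow> nat" where "dd k = 2^k - 1"

lemma dd_Suc: "dd (Suc k) = Suc (2 * dd k)"
proof -
  have "(2::nat)^k > 0" by simp
  then obtain t where t: "(2::nat)^k = Suc t" using gr0_conv_Suc by blast
  then show ?thesis unfolding dd_def by simp
qed

lemma dd_ge: "k \<le> dd k"
proof (induction k)
  case (Suc k) then show ?case by (simp add: dd_Suc)
qed (simp add: dd_def)

lemma dd_0[simp]: "dd 0 = 0" by (simp add: dd_def)
lemma dd_1[simp]: "dd 1 = 1" by (simp add: dd_def)

fun code :: "nat \<Rightarrow> nat set set" where
  "code 0 = {{}}"
| "code (Suc k) = {A \<in> Pow {..<dd (Suc k)}. vv (dd k) A \<in> code k \<and>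
      (dd k \<in> A \<longleftrightarrow> odd (card (yy (dd k) A)))}"

lemma code_sub: "code k \<subseteq> Pow {..<dd k}"
  by (cases k) auto

lemma code_fin: "c \<in> code k \<Longrightarrow> finite c"
  using code_sub finite_subset by blast

lemma code_empty: "{} \<in> code k"
proof (induction k)
  case (Suc k)
  have "vv (dd k) {} = {}" "yy (dd k) {} = {}" by (auto simp: vv_def yy_def)
  then show ?case using Suc by simp
qed simp

lemma odd_card_flip: "finite Y \<Longrightarrow> odd (card (flip Y i)) \<longleftrightarrow> \<not> odd (card Y)"
proof (cases "i \<in> Y")
  case True
  assume f: "finite Y"
  then have "card Y \<ge> 1" using True by (metis One_nat_def Suc_leI card_gt_0_iff empty_iff)
  then show ?thesis using card_flip_in[OF f True] by (cases "card Y") auto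
next
  case False
  assume f: "finite Y"
  then show ?thesis using card_flip_notin[OF f False] by simp
qed

lemma finite_yy: "finite (yy m A)"
  using yy_sub finite_subset by blast

lemma code_cover: "B \<subseteq> {..<dd k} \<Longrightarrow> \<exists>c\<in>code k. card (sd B c) \<le> 1"
proof (induction k arbitrary: B)
  case 0 then show ?case by auto
next
  case (Suc k)
  define m where "m = dd k"
  have D: "dd (Suc k) = Suc (2*m)" by (simp add: m_def dd_Suc)
  define par where "par A \<longleftrightarrow> (m \<in> A \<longleftrightarrow> odd (card (yy m A)))" for A
  have cS: "c \<in> code (Suc k) \<longleftrightarrow> c \<subseteq> {..<Suc (2*m)} \<and> vv m c \<in> code k \<and> par c" for c
    by (simp add: D m_def[symmetric] par_def)
  have B: "B \<subseteq> {..<Suc (2*m)}" using Suc.prems D by simp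
  obtain c0 where c0: "c0 \<in> code k" "card (sd (vv m B) c0) \<le> 1"
    using Suc.IH[of "vv m B"] vv_sub m_def by blast
  have fin: "finite (sd (vv m B) c0)" using c0(1) code_fin finite_sd vv_sub finite_subset
    by (metis finite_lessThan)
  show ?case
  proof (cases "sd (vv m B) c0 = {}")
    case True
    then have v: "vv m B = c0" by (simp add: sd_empty_iff)
    show ?thesis
    proof (cases "par B")
      case True
      then show ?thesis using B v c0 cS[of B] by (intro bexI[of _ B]) auto
    next
      case False
      have "par (flip B m)" using False unfolding par_def yy_flip_mid by simp
      moreover have "flip B m \<subseteq> {..<Suc (2*m)}" using B flip_sub by simp
      ultimately have "flip B m \<in> code (Suc k)" using cS v c0 vv_flip_mid by simp
      moreover have "card (sd B (flip B m)) \<le> 1" using sd_flip_self[of B m] sd_comm by simp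
      ultimately show ?thesis by blast
    qed
  next
    case False
    then have "card (sd (vv m B) c0) = 1" using c0(2) fin by (simp add: le_Suc_eq)
    then obtain i where i: "c0 = flip (vv m B) i" using card1_sd by blast
    have im: "i < m"
    proof -
      have "i \<in> sd (vv m B) c0" using i by simp
      then show ?thesis using vv_sub[of m B] code_sub[of k] c0(1) m_def by auto
    qed
    show ?thesis
    proof (cases "par B")
      case True
      have "par (flip B i)" using True im unfolding par_def yy_flip_x[OF im] by simp
      moreover have "flip B i \<subseteq> {..<Suc (2*m)}" using B flip_sub im by simp
      ultimately have "flip B i \<in> code (Suc k)" using cS vv_flip_x[OF im] i c0 by simp
      moreover have "card (sd B (flip B i)) \<le> 1" using sd_flip_self[of B i] sd_comm by simp
      ultimately show ?thesis by blast
    next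
      case False
      have "par (flip B (m+1+i))" using False im odd_card_flip[OF finite_yy]
        unfolding par_def yy_flip_y[OF im] by simp
      moreover have "flip B (m+1+i) \<subseteq> {..<Suc (2*m)}" using B flip_sub im by simp
      ultimately have "flip B (m+1+i) \<in> code (Suc k)" using cS vv_flip_y[OF im] i c0 by simp
      moreover have "card (sd B (flip B (m+1+i))) \<le> 1" using sd_flip_self[of B] sd_comm by simp
      ultimately show ?thesis by blast
    qed
  qed
qed



lemma card_vv_sd:
  assumes "finite (sd c c')"
  shows "card (sd (vv m c) (vv m c')) \<le> card (sd c c')"
proof -
  define f where "f i = (if i \<in> sd c c' then i else m + 1 + i)" for i
  have "inj_on f (sd (vv m c) (vv m c'))"
  proof (rule inj_onI)
    fix a b assume a: "a \<in> sd (vv m c) (vv m c')" and b: "b \<in> sd (vv m c) (vv m c')" and e: "f a = f b"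
    have am: "a < m" using a by (auto simp: vv_def)
    have bm: "b < m" using b by (auto simp: vv_def)
    show "a = b" using e am bm by (auto simp: f_def split: if_splits)
  qed
  moreover have "f ` sd (vv m c) (vv m c') \<subseteq> sd c c'"
    by (auto simp: f_def vv_def)
  ultimately show ?thesis using card_inj_on_le assms by blast
qed

lemma card_ge3:
  assumes "finite X" "a \<in> X" "b \<in> X" "c \<in> X" "a \<noteq> b" "a \<noteq> c" "b \<noteq> c"
  shows "card X \<ge> 3"
proof -
  have "card {a, b, c} = 3" using assms by simp
  moreover have "card {a, b, c} \<le> card X" using assms by (intro card_mono) auto
  ultimately show ?thesis by simp
qed

lemma yy_eq: "yy m A = sd (A \<inter> {..<m}) (vv m A)"
  by (auto simp: yy_def vv_def)

lemma code_dist: "c \<in> code k \<Longrightarrow> c' \<in> code k \<Longrightarrow> card (sd c c') \<le> 2 \<Longrightarrow> c = c'"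
proof (induction k arbitrary: c c')
  case 0 then show ?case by simp
next
  case (Suc k)
  define m where "m = dd k"
  have D: "dd (Suc k) = Suc (2*m)" by (simp add: m_def dd_Suc)
  have cc: "c \<subseteq> {..<Suc (2*m)}" "vv m c \<in> code k" "(m \<in> c \<longleftrightarrow> odd (card (yy m c)))"
    using Suc.prems(1) D by (auto simp: m_def)
  have cc': "c' \<subseteq> {..<Suc (2*m)}" "vv m c' \<in> code k" "(m \<in> c' \<longleftrightarrow> odd (card (yy m c')))"
    using Suc.prems(2) D by (auto simp: m_def)
  have fin: "finite (sd c c')" using cc(1) cc'(1) finite_sd finite_subset by (metis finite_lessThan)
  have v: "vv m c = vv m c'"
    using Suc.IH[OF cc(2) cc'(2)] card_vv_sd[OF fin, of m] Suc.prems(3) by linarith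
  show ?case
  proof (rule ccontr)
    assume ne: "c \<noteq> c'"
    show False
    proof (cases "c \<inter> {..<m} = c' \<inter> {..<m}")
      case True
      then have "yy m c = yy m c'" using v yy_eq by metis
      then have "(m \<in> c) = (m \<in> c')" using cc(3) cc'(3) by simp
      then have "c = c'" using determ[OF cc(1) cc'(1) True v] by simp
      then show False using ne by simp
    next
      case False
      then obtain i where i: "i < m" "(i \<in> c) \<noteq> (i \<in> c')" by blast
      have ti: "(m+1+i \<in> c) \<noteq> (m+1+i \<in> c')"
      proof -
        have "(i \<in> vv m c) = (i \<in> vv m c')" using v by simp
        then show ?thesis using i by (auto simp: vv_def)
      qed
      have mm: "(m \<in> c) = (m \<in> c')"
      proof (rule ccontr)
        assume "(m \<in> c) \<noteq> (m \<in> c')"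
        then have "card (sd c c') \<ge> 3"
          using card_ge3[OF fin, of i m "m+1+i"] i ti by auto
        then show False using Suc.prems(3) by simp
      qed
      have P: "\<forall>j<m. j \<noteq> i \<longrightarrow> (j \<in> c) = (j \<in> c')"
      proof (intro allI impI, rule ccontr)
        fix j assume j: "j < m" "j \<noteq> i" "(j \<in> c) \<noteq> (j \<in> c')"
        then have "card (sd c c') \<ge> 3"
          using card_ge3[OF fin, of i j "m+1+i"] i ti by auto
        then show False using Suc.prems(3) by simp
      qed
      have "yy m c' = flip (yy m c) i"
      proof (rule set_eqI)
        fix j show "j \<in> yy m c' \<longleftrightarrow> j \<in> flip (yy m c) i"
        proof (cases "j < m")
          case True
          have "(j \<in> vv m c) = (j \<in> vv m c')" using v by simp
          then show ?thesis using True P ti by (auto simp: vv_def yy_def)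
        next
          case False then show ?thesis using i by (auto simp: yy_def)
        qed
      qed
      then have "odd (card (yy m c')) \<longleftrightarrow> \<not> odd (card (yy m c))"
        using odd_card_flip[OF finite_yy] by simp
      then show False using mm cc(3) cc'(3) by simp
    qed
  qed
qed

lemma code_mono: "code k \<subseteq> code (Suc k)"
proof
  fix c assume c: "c \<in> code k"
  have s: "c \<subseteq> {..<dd k}" using c code_sub by blast
  have "c \<subseteq> {..<dd (Suc k)}" using s by (auto simp: dd_Suc)
  moreover have "vv (dd k) c = c" using vv_low[OF s] .
  moreover have "yy (dd k) c = {}" using yy_low[OF s] .
  moreover have "dd k \<notin> c" using s by auto
  ultimately show "c \<in> code (Suc k)" using c by simp
qed

lemma finite_code: "finite (code k)"
  using code_sub finite_subset by (metis finite_Pow_iff finite_lessThan)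

lemma card_code: "card (code k) \<le> 2 ^ (dd k - k)"
proof (induction k)
  case 0 then show ?case by simp
next
  case (Suc k)
  define m where "m = dd k"
  have D: "dd (Suc k) = Suc (2*m)" by (simp add: m_def dd_Suc)
  define f where "f A = (A \<inter> {..<m}, vv m A)" for A
  have inj: "inj_on f (code (Suc k))"
  proof (rule inj_onI)
    fix A B assume A: "A \<in> code (Suc k)" and B: "B \<in> code (Suc k)" and e: "f A = f B"
    have a: "A \<subseteq> {..<Suc (2*m)}" "(m \<in> A \<longleftrightarrow> odd (card (yy m A)))"
      using A D by (auto simp: m_def)
    have b: "B \<subseteq> {..<Suc (2*m)}" "(m \<in> B \<longleftrightarrow> odd (card (yy m B)))"
      using B D by (auto simp: m_def)
    have x: "A \<inter> {..<m} = B \<inter> {..<m}" and v: "vv m A = vv m B" using e by (auto simp: f_def)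
    have "yy m A = yy m B" using x v yy_eq by metis
    then have "(m \<in> A) = (m \<in> B)" using a(2) b(2) by simp
    then show "A = B" using determ[OF a(1) b(1) x v] by simp
  qed
  have img: "f ` code (Suc k) \<subseteq> Pow {..<m} \<times> code k"
    by (auto simp: f_def m_def)
  have "card (code (Suc k)) \<le> card (Pow {..<m} \<times> code k)"
    using card_inj_on_le[OF inj img] finite_code by (simp add: finite_cartesian_product)
  also have "\<dots> = 2^m * card (code k)" by (simp add: card_cartesian_product card_Pow)
  also have "\<dots> \<le> 2^m * 2^(m - k)" using Suc.IH m_def by simp
  also have "\<dots> = 2^(dd (Suc k) - Suc k)"
  proof -
    have "k \<le> m" using dd_ge m_def by simp
    then have "m + (m - k) = dd (Suc k) - Suc k" using D by simp
    then show ?thesis by (metis power_add)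
  qed
  finally show ?case .
qed



locale stp =
  fixes m :: nat and C Sin :: "nat set set" and z :: "nat set"
  assumes m1: "1 \<le> m"
    and Csub: "C \<subseteq> Pow {..<m}"
    and Cemp: "{} \<in> C"
    and cover: "\<And>B. B \<subseteq> {..<m} \<Longrightarrow> \<exists>c\<in>C. card (sd B c) \<le> 1"
    and cdist: "\<And>c c'. c \<in> C \<Longrightarrow> c' \<in> C \<Longrightarrow> card (sd c c') \<le> 2 \<Longrightarrow> c = c'"
    and Ssub: "Sin \<subseteq> Pow {..<m}"
    and icp: "connected_on {e \<in> cube_edges m. e \<inter> Sin \<noteq> {}} (Pow {..<m} - {z})"
begin

definition "SS = {A \<in> Pow {..<Suc (2*m)}. vv m A \<in> C} \<union> Sin"
definition "EE = {e \<in> cube_edges (Suc (2*m)). e \<inter> SS \<noteq> {}}"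
definition "WW = Pow {..<Suc (2*m)} - {z}"
definition "R = (\<lambda>a b. {a, b} \<in> EE \<and> a \<in> WW \<and> b \<in> WW)\<^sup>*\<^sup>*"
definition "emb u p = (\<lambda>i. m+1+i) ` u \<union> (if p then {m} else {})"
definition "pT u = (z = emb u False)"
definition "T u = emb u (pT u)"

lemma R_refl: "R a a"
  by (simp add: R_def)

lemma R_sym: "R a b \<Longrightarrow> R b a"
  unfolding R_def
proof (induction rule: rtranclp_induct)
  case base then show ?case by simp
next
  case (step y w)
  then have "(\<lambda>a b. {a, b} \<in> EE \<and> a \<in> WW \<and> b \<in> WW) w y" by (simp add: insert_commute)
  then show ?case using step(3) by (rule converse_rtranclp_into_rtranclp)
qed

lemma R_trans: "R a b \<Longrightarrow> R b c \<Longrightarrow> R a c"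
  unfolding R_def by (rule rtranclp_trans)

lemma R_edge:
  assumes "a \<subseteq> {..<Suc (2*m)}" "j < Suc (2*m)" "a \<noteq> z" "flip a j \<noteq> z"
    "a \<in> SS \<or> flip a j \<in> SS"
  shows "R a (flip a j)"
proof -
  have e: "{a, flip a j} \<in> cube_edges (Suc (2*m))" by (rule cube_edge_flip[OF assms(1,2)])
  have "{a, flip a j} \<in> EE" using e assms(5) unfolding EE_def by blast
  moreover have "a \<in> WW" "flip a j \<in> WW" using assms flip_sub[OF assms(1,2)] by (auto simp: WW_def)
  ultimately show ?thesis unfolding R_def by (intro r_into_rtranclp) simp
qed

lemma S0_in: "A \<subseteq> {..<Suc (2*m)} \<Longrightarrow> vv m A \<in> C \<Longrightarrow> A \<in> SS"
  by (simp add: SS_def)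

lemma emb_sub: "u \<subseteq> {..<m} \<Longrightarrow> emb u p \<subseteq> {..<Suc (2*m)}"
  by (auto simp: emb_def)

lemma emb_vv: "u \<subseteq> {..<m} \<Longrightarrow> vv m (emb u p) = u"
  by (auto simp: emb_def vv_def)

lemma emb_x: "emb u p \<inter> {..<m} = {}"
  by (auto simp: emb_def)

lemma emb_mid: "(m \<in> emb u p) = p"
  by (auto simp: emb_def)

lemma T_neq: "T u \<noteq> z"
proof (cases "pT u")
  case True
  then have "z = emb u False" by (simp add: pT_def)
  moreover have "T u = emb u True" using True by (simp add: T_def)
  ultimately show ?thesis using emb_mid[of u True] emb_mid[of u False] by auto
next
  case False
  then show ?thesis by (simp add: T_def pT_def)
qed

lemma T_uniq:
  assumes "u \<subseteq> {..<m}" "A \<subseteq> {..<Suc (2*m)}" "vv m A = u" "A \<inter> {..<m} = {}" "(m \<in> A) = pT u"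
  shows "A = T u"
proof -
  have "T u \<subseteq> {..<Suc (2*m)}" using emb_sub[OF assms(1)] by (simp add: T_def)
  moreover have "vv m (T u) = u" using emb_vv[OF assms(1)] by (simp add: T_def)
  moreover have "T u \<inter> {..<m} = {}" using emb_x by (simp add: T_def)
  moreover have "(m \<in> T u) = pT u" using emb_mid by (simp add: T_def)
  ultimately show ?thesis using determ[OF assms(2), of "T u"] assms by simp
qed

lemma T_in: "u \<subseteq> {..<m} \<Longrightarrow> T u \<in> WW"
  using emb_sub T_neq by (simp add: T_def WW_def)

lemma dbl:
  assumes A: "A \<in> WW" and i: "i < m" and A1: "flip (flip A i) (m+1+i) \<in> WW"
    and S: "A \<in> SS" "flip (flip A i) (m+1+i) \<in> SS"
  shows "R A (flip (flip A i) (m+1+i))"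
proof -
  have As: "A \<subseteq> {..<Suc (2*m)}" "A \<noteq> z" using A by (auto simp: WW_def)
  have A1s: "flip (flip A i) (m+1+i) \<noteq> z" using A1 by (auto simp: WW_def)
  have im: "i < Suc (2*m)" "m+1+i < Suc (2*m)" using i by auto
  show ?thesis
  proof (cases "flip A i = z")
    case False
    have "R A (flip A i)" using R_edge[OF As(1) im(1) As(2) False] S by simp
    moreover have "R (flip A i) (flip (flip A i) (m+1+i))"
      using R_edge[OF flip_sub[OF As(1) im(1)] im(2) False A1s] S by simp
    ultimately show ?thesis by (rule R_trans)
  next
    case True
    have ne: "flip A (m+1+i) \<noteq> z"
    proof
      assume "flip A (m+1+i) = z"
      then have "flip A (m+1+i) = flip A i" using True by simp
      then show False by simp
    qed
    have eq: "flip (flip A (m+1+i)) i = flip (flip A i) (m+1+i)" by (rule flip_comm)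
    have "R A (flip A (m+1+i))" using R_edge[OF As(1) im(2) As(2) ne] S by simp
    moreover have "R (flip A (m+1+i)) (flip (flip A (m+1+i)) i)"
      using R_edge[OF flip_sub[OF As(1) im(2)] im(1) ne] A1s S eq by simp
    ultimately show ?thesis using eq R_trans by metis
  qed
qed

end



context stp begin

lemma within0:
  assumes u: "u \<in> C"
  shows "A \<in> WW \<Longrightarrow> vv m A = u \<Longrightarrow> R A (T u)"
proof (induction "card (A \<inter> {..<m}) + (if (m \<in> A) = pT u then 0 else 1)" arbitrary: A rule: less_induct)
  case less
  have us: "u \<subseteq> {..<m}" using u Csub by blast
  have As: "A \<subseteq> {..<Suc (2*m)}" "A \<noteq> z" using less.prems by (auto simp: WW_def)
  have AS: "A \<in> SS" using S0_in[OF As(1)] less.prems u by simp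
  define x where "x = A \<inter> {..<m}"
  have finx: "finite x" by (simp add: x_def)
  define A1 where "A1 i = flip (flip A i) (m+1+i)" for i
  have A1s: "A1 i \<subseteq> {..<Suc (2*m)}" if "i < m" for i
    using that As(1) flip_sub by (simp add: A1_def)
  have A1v: "vv m (A1 i) = u" if "i < m" for i
    unfolding A1_def vv_flip_y[OF that] vv_flip_x[OF that] using less.prems(2) by simp
  have A1x: "A1 i \<inter> {..<m} = x - {i}" if "i \<in> x" for i
    using that by (auto simp: A1_def x_def split: if_splits)
  have A1m: "(m \<in> A1 i) = (m \<in> A)" if "i < m" for i
    using that by (simp add: A1_def)
  have A1S: "A1 i \<in> SS" if "i < m" for i
    using S0_in[OF A1s[OF that]] A1v[OF that] u by simp
  show ?case
  proof (cases "x = {} \<and> (m \<in> A) = pT u")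
    case True
    then have "A = T u" using T_uniq[OF us As(1) less.prems(2)] by (simp add: x_def)
    then show ?thesis by (simp add: R_refl)
  next
    case nT: False
    show ?thesis
    proof (cases "(m \<in> A) \<noteq> pT u \<and> flip A m \<noteq> z")
      case True
      have mD: "m < Suc (2*m)" by simp
      have e: "R A (flip A m)" using R_edge[OF As(1) mD As(2)] True AS by simp
      have fW: "flip A m \<in> WW" using True flip_sub[OF As(1) mD] by (simp add: WW_def)
      have fv: "vv m (flip A m) = u" using less.prems(2) vv_flip_mid by simp
      have fx: "flip A m \<inter> {..<m} = x" by (auto simp: x_def)
      have "R (flip A m) (T u)"
        by (rule less.hyps[OF _ fW fv]) (use True fx x_def in auto)
      then show ?thesis using e R_trans by blast
    next
      case nM: False
      have ex: "\<exists>i\<in>x. A1 i \<noteq> z"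
      proof (rule ccontr)
        assume H: "\<not> (\<exists>i\<in>x. A1 i \<noteq> z)"
        have xne: "x \<noteq> {}"
        proof
          assume x0: "x = {}"
          then have mp: "(m \<in> A) \<noteq> pT u" using nT by simp
          then have fz: "flip A m = z" using nM by simp
          have mD: "m < Suc (2*m)" by simp
          have a: "flip A m \<inter> {..<m} = {}" using x0 by (auto simp: x_def split: if_splits)
          have b: "vv m (flip A m) = u" using vv_flip_mid less.prems(2) by simp
          have c: "(m \<in> flip A m) = pT u" using mp by simp
          have "flip A m = T u"
            by (rule T_uniq[OF us flip_sub[OF As(1) mD] b a c])
          then show False using fz T_neq[of u] by simp
        qed
        then obtain i where i: "i \<in> x" by blast
        have im: "i < m" using i by (simp add: x_def)
        have xi: "x = {i}"
        proof (rule ccontr)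
          assume "x \<noteq> {i}"
          then obtain i' where i': "i' \<in> x" "i' \<noteq> i" using i by blast
          have "A1 i = A1 i'" using H i i' by simp
          moreover have "i \<notin> A1 i" "i \<in> A1 i'" using i i' im by (auto simp: A1_def x_def)
          ultimately show False by simp
        qed
        have A1z: "A1 i = z" using H i by simp
        have A1e: "A1 i \<inter> {..<m} = {}" using A1x[OF i] xi by simp
        show False
        proof (cases "(m \<in> A) = pT u")
          case True
          then have "A1 i = T u" using T_uniq[OF us A1s[OF im] A1v[OF im] A1e] A1m[OF im] by simp
          then show False using A1z T_neq[of u] by simp
        next
          case False
          then have "flip A m = z" using nM by simp
          then have "flip A m = A1 i" using A1z by simp
          moreover have "(m \<in> flip A m) \<noteq> (m \<in> A1 i)" using A1m[OF im] by simp
          ultimately show False by simp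
        qed
      qed
      then obtain i where i: "i \<in> x" "A1 i \<noteq> z" by blast
      have im: "i < m" using i by (simp add: x_def)
      have A1W: "A1 i \<in> WW" using A1s[OF im] i(2) by (simp add: WW_def)
      have e: "R A (A1 i)"
        using dbl[OF less.prems(1) im] A1W AS A1S[OF im] by (simp add: A1_def)
      have cx: "card (A1 i \<inter> {..<m}) < card x"
        using A1x[OF i(1)] finx i(1) card_Diff1_less by metis
      have "R (A1 i) (T u)"
        by (rule less.hyps[OF _ A1W A1v[OF im]]) (use cx A1m[OF im] x_def in auto)
      then show ?thesis using e R_trans by blast
    qed
  qed
qed

end



context stp begin

lemma within:
  assumes u: "u \<in> C" and A: "A \<in> WW" and d: "card (sd (vv m A) u) \<le> 1"
  shows "R A (T u)"
proof (cases "vv m A = u")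
  case True then show ?thesis using within0[OF u A] by simp
next
  case False
  have us: "u \<subseteq> {..<m}" using u Csub by blast
  have fin: "finite (sd (vv m A) u)" using us vv_sub finite_sd finite_subset by (metis finite_lessThan)
  have "sd (vv m A) u \<noteq> {}" using False sd_empty_iff by metis
  then have "card (sd (vv m A) u) = 1" using d fin by (simp add: le_Suc_eq)
  then obtain i where i: "u = flip (vv m A) i" using card1_sd by blast
  have im: "i < m"
  proof -
    have "i \<in> sd (vv m A) u" using i by simp
    then show ?thesis using vv_sub[of m A] us by auto
  qed
  have As: "A \<subseteq> {..<Suc (2*m)}" "A \<noteq> z" using A by (auto simp: WW_def)
  have im2: "i < Suc (2*m)" "m+1+i < Suc (2*m)" using im by auto
  have v1: "vv m (flip A i) = u" using vv_flip_x[OF im] i by simp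
  have v2: "vv m (flip A (m+1+i)) = u" using vv_flip_y[OF im] i by simp
  show ?thesis
  proof (cases "flip A i = z")
    case False
    have S: "flip A i \<in> SS" using S0_in[OF flip_sub[OF As(1) im2(1)]] v1 u by simp
    have e: "R A (flip A i)" using R_edge[OF As(1) im2(1) As(2) False] S by simp
    have W: "flip A i \<in> WW" using False flip_sub[OF As(1) im2(1)] by (simp add: WW_def)
    show ?thesis using e within0[OF u W v1] R_trans by blast
  next
    case True
    have ne: "flip A (m+1+i) \<noteq> z"
    proof
      assume "flip A (m+1+i) = z"
      then have "flip A (m+1+i) = flip A i" using True by simp
      then show False by simp
    qed
    have S: "flip A (m+1+i) \<in> SS" using S0_in[OF flip_sub[OF As(1) im2(2)]] v2 u by simp
    have e: "R A (flip A (m+1+i))" using R_edge[OF As(1) im2(2) As(2) ne] S by simp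
    have W: "flip A (m+1+i) \<in> WW" using ne flip_sub[OF As(1) im2(2)] by (simp add: WW_def)
    show ?thesis using e within0[OF u W v2] R_trans by blast
  qed
qed

lemma cross:
  assumes q: "q \<in> Sin" "q \<notin> C" "q \<noteq> z" and u: "u \<in> C" and d: "card (sd q u) \<le> 2"
  shows "R q (T u)"
proof -
  have us: "u \<subseteq> {..<m}" using u Csub by blast
  have qs: "q \<subseteq> {..<m}" using q Ssub by blast
  have qs2: "q \<subseteq> {..<Suc (2*m)}" using qs by auto
  have qS: "q \<in> SS" using q by (simp add: SS_def)
  have fin: "finite (sd q u)" using us qs finite_sd finite_subset by (metis finite_lessThan)
  have "q \<noteq> u" using q u by blast
  then have "sd q u \<noteq> {}" using sd_empty_iff by metis
  then obtain j where j: "j \<in> sd q u" by blast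
  have jm: "j < m" using j qs us by auto
  have jm2: "j < Suc (2*m)" "m+1+j < Suc (2*m)" using jm by auto
  have vq: "vv m q = q" using vv_low[OF qs] .
  have v1: "vv m (flip q j) = flip q j" using vv_flip_x[OF jm] vq by simp
  have v2: "vv m (flip q (m+1+j)) = flip q j" using vv_flip_y[OF jm] vq by simp
  have dd: "card (sd (flip q j) u) \<le> 1"
  proof -
    have "sd (flip q j) u = flip (sd q u) j" by (rule sd_flip)
    then have "card (sd (flip q j) u) = card (sd q u) - 1" using card_flip_in[OF fin j] by simp
    then show ?thesis using d by simp
  qed
  show ?thesis
  proof (cases "flip q j = z")
    case False
    have e: "R q (flip q j)" using R_edge[OF qs2 jm2(1) q(3) False] qS by simp
    have W: "flip q j \<in> WW" using False flip_sub[OF qs2 jm2(1)] by (simp add: WW_def)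
    have "R (flip q j) (T u)" using within[OF u W] v1 dd by simp
    then show ?thesis using e R_trans by blast
  next
    case True
    have ne: "flip q (m+1+j) \<noteq> z"
    proof
      assume "flip q (m+1+j) = z"
      then have "flip q (m+1+j) = flip q j" using True by simp
      then show False by simp
    qed
    have e: "R q (flip q (m+1+j))" using R_edge[OF qs2 jm2(2) q(3) ne] qS by simp
    have W: "flip q (m+1+j) \<in> WW" using ne flip_sub[OF qs2 jm2(2)] by (simp add: WW_def)
    have "R (flip q (m+1+j)) (T u)" using within[OF u W] v2 dd by simp
    then show ?thesis using e R_trans by blast
  qed
qed

lemma via_q:
  assumes q: "q \<in> Sin" "q \<noteq> z" and c: "c1 \<in> C" "c2 \<in> C"
    and d: "card (sd q c1) \<le> 2" "card (sd q c2) \<le> 2"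
  shows "R (T c1) (T c2)"
proof (cases "q \<in> C")
  case True
  have "q = c1" using cdist[OF True c(1) d(1)] .
  moreover have "q = c2" using cdist[OF True c(2) d(2)] .
  ultimately show ?thesis by (simp add: R_refl)
next
  case False
  have "R q (T c1)" "R q (T c2)" using cross[OF q(1) False q(2)] c d by auto
  then show ?thesis using R_sym R_trans by blast
qed

abbreviation "Ein \<equiv> {e \<in> cube_edges m. e \<inter> Sin \<noteq> {}}"
abbreviation "Win \<equiv> Pow {..<m} - {z}"

lemma inner_edge:
  assumes e: "{B1, B2} \<in> Ein" and B: "B1 \<in> Win" "B2 \<in> Win"
    and c: "c1 \<in> C" "c2 \<in> C" "card (sd B1 c1) \<le> 1" "card (sd B2 c2) \<le> 1"
  shows "R (T c1) (T c2)"
proof -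
  have d: "card (sd B1 B2) = 1" using cube_edge_dist(3)[of B1 B2 m] e by simp
  have fB1: "finite B1" "finite B2" using B by (auto intro: finite_subset)
  have fc: "finite c1" "finite c2" using c Csub by (auto intro: finite_subset)
  have d12: "card (sd B1 c2) \<le> 2"
    using card_sd_tri[OF fB1(1) fB1(2) fc(2)] d c(4) by simp
  have d21: "card (sd B2 c1) \<le> 2"
  proof -
    have "card (sd B2 c1) \<le> card (sd B2 B1) + card (sd B1 c1)"
      using card_sd_tri[OF fB1(2) fB1(1) fc(1)] .
    then show ?thesis using d c(3) sd_comm[of B1 B2] by simp
  qed
  have "B1 \<in> Sin \<or> B2 \<in> Sin" using e by auto
  then show ?thesis
  proof
    assume "B1 \<in> Sin"
    then show ?thesis using via_q[of B1 c1 c2] B c d12 by auto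
  next
    assume "B2 \<in> Sin"
    then show ?thesis using via_q[of B2 c1 c2] B c d21 by auto
  qed
qed

lemma inner_path:
  assumes "(\<lambda>a b. {a, b} \<in> Ein \<and> a \<in> Win \<and> b \<in> Win)\<^sup>*\<^sup>* B B'"
  shows "B \<in> Win \<Longrightarrow> c \<in> C \<Longrightarrow> c' \<in> C \<Longrightarrow> card (sd B c) \<le> 1 \<Longrightarrow> card (sd B' c') \<le> 1
     \<Longrightarrow> R (T c) (T c')"
  using assms
proof (induction arbitrary: c' rule: rtranclp_induct)
  case base
  have fB: "finite B" using base by (auto intro: finite_subset)
  have "c \<subseteq> {..<m}" "c' \<subseteq> {..<m}" using base(2,3) Csub by auto
  then have fc: "finite c" "finite c'" by (auto intro: finite_subset)
  have "card (sd c c') \<le> card (sd c B) + card (sd B c')" using card_sd_tri[OF fc(1) fB fc(2)] .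
  then have "card (sd c c') \<le> 2" using base sd_comm[of c B] by simp
  then have "c = c'" using cdist base by blast
  then show ?case by (simp add: R_refl)
next
  case (step y w)
  have yW: "y \<in> Win" using step(2) by simp
  obtain c1 where c1: "c1 \<in> C" "card (sd y c1) \<le> 1" using cover[of y] yW by auto
  have "R (T c) (T c1)" using step.IH[OF step.prems(1,2) c1(1) step.prems(4) c1(2)] .
  moreover have "R (T c1) (T c')"
    using inner_edge[of y w c1 c'] step(2) c1 step.prems(3,5) by simp
  ultimately show ?case using R_trans by blast
qed

end



context stp begin

lemma main: "connected_on EE WW"
proof -
  have m0: "0 < m" using m1 by simp
  have all: "R A (T {})" if A: "A \<in> WW" for A
  proof -
    obtain c where c: "c \<in> C" "card (sd (vv m A) c) \<le> 1" using cover[OF vv_sub] by blast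
    have r1: "R A (T c)" using within[OF c(1) A c(2)] .
    have cs: "c \<subseteq> {..<m}" using c Csub by blast
    define B where "B = (if c = z then flip c 0 else c)"
    have BW: "B \<in> Win" using cs flip_sub[OF cs m0] by (auto simp: B_def)
    have Bd: "card (sd B c) \<le> 1"
    proof (cases "c = z")
      case True
      then have "sd B c = {0}" using sd_flip_self[of c 0] by (simp add: B_def)
      then show ?thesis by simp
    next
      case False then show ?thesis by (simp add: B_def)
    qed
    define B0 where "B0 = (if {} = z then {0::nat} else {})"
    have B0W: "B0 \<in> Win" using m0 by (auto simp: B0_def)
    have B0d: "card (sd B0 {}) \<le> 1"
    proof (cases "{} = z")
      case True
      have "sd {0::nat} {} = {0}" by auto
      then show ?thesis using True by (simp add: B0_def)
    next
      case False then show ?thesis by (simp add: B0_def)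
    qed
    have "(\<lambda>a b. {a, b} \<in> Ein \<and> a \<in> Win \<and> b \<in> Win)\<^sup>*\<^sup>* B B0"
      using icp BW B0W unfolding connected_on_def by simp
    then have "R (T c) (T {})" by (rule inner_path[OF _ BW c(1) Cemp Bd B0d])
    then show ?thesis using r1 R_trans by metis
  qed
  have ne: "WW \<noteq> {}"
  proof
    assume e: "WW = {}"
    have "{} \<in> Pow {..<Suc (2*m)}" "{0} \<in> Pow {..<Suc (2*m)}" by auto
    then show False using e by (auto simp: WW_def)
  qed
  show ?thesis unfolding connected_on_def
  proof (intro conjI ballI ne)
    fix a b assume "a \<in> WW" "b \<in> WW"
    then have "R a b" using all R_sym R_trans by metis
    then show "(\<lambda>a b. {a, b} \<in> EE \<and> a \<in> WW \<and> b \<in> WW)\<^sup>*\<^sup>* a b" by (simp add: R_def)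
  qed
qed

end

lemma dd_Suc0[simp]: "dd (Suc 0) = Suc 0" by (simp add: dd_def)

definition S0 :: "nat \<Rightarrow> nat set set" where
  "S0 k = {A \<in> Pow {..<dd (Suc k)}. vv (dd k) A \<in> code k}"

fun sset :: "nat \<Rightarrow> nat set set" where
  "sset 0 = {{}}"
| "sset (Suc k) = (if k = 0 then {{}} else S0 k \<union> sset k)"

definition Ek :: "nat \<Rightarrow> nat set set set" where
  "Ek k = {e \<in> cube_edges (dd k). e \<inter> sset k \<noteq> {}}"

lemma dd_mono: "k \<le> k' \<Longrightarrow> dd k \<le> dd k'"
  unfolding dd_def by (simp add: diff_le_mono)

lemma sset_sub: "sset k \<subseteq> Pow {..<dd k}"
proof (induction k)
  case (Suc k)
  have "dd k \<le> dd (Suc k)" by (simp add: dd_mono)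
  then have "Pow {..<dd k} \<subseteq> Pow {..<dd (Suc k)}" by auto
  then show ?case using Suc by (auto simp: S0_def)
qed simp

lemma icp_all: "1 \<le> k \<Longrightarrow> connected_on (Ek k) (Pow {..<dd k} - {z})"
proof (induction k arbitrary: z rule: dec_induct)
  case base
  have l1: "{..<dd 1} = {0::nat}" by (auto simp: dd_def)
  have P: "Pow {..<dd 1} = {{}, {0}}" unfolding l1 by (auto simp: Pow_insert)
  have e: "{{}, {0::nat}} \<in> Ek 1"
  proof -
    have "{{}, flip {} 0} \<in> cube_edges 1" by (rule cube_edge_flip) auto
    then show ?thesis by (auto simp: Ek_def flip_def)
  qed
  show ?case unfolding connected_on_def
  proof (intro conjI ballI)
    show "Pow {..<dd 1} - {z} \<noteq> {}" using P by auto
  next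
    fix a b assume a: "a \<in> Pow {..<dd 1} - {z}" and b: "b \<in> Pow {..<dd 1} - {z}"
    show "(\<lambda>a b. {a, b} \<in> Ek 1 \<and> a \<in> Pow {..<dd 1} - {z} \<and> b \<in> Pow {..<dd 1} - {z})\<^sup>*\<^sup>* a b"
    proof (cases "a = b")
      case True then show ?thesis by simp
    next
      case False
      then have "{a, b} = {{}, {0}}" using a b P by auto
      then show ?thesis using e a b by (intro r_into_rtranclp) simp
    qed
  qed
next
  case (step k)
  interpret stp "dd k" "code k" "sset k" z
  proof
    show "1 \<le> dd k" using step.hyps dd_ge[of k] by simp
    show "code k \<subseteq> Pow {..<dd k}" by (rule code_sub)
    show "{} \<in> code k" by (rule code_empty)
    show "\<And>B. B \<subseteq> {..<dd k} \<Longrightarrow> \<exists>c\<in>code k. card (sd B c) \<le> 1" by (rule code_cover)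
    show "\<And>c c'. c \<in> code k \<Longrightarrow> c' \<in> code k \<Longrightarrow> card (sd c c') \<le> 2 \<Longrightarrow> c = c'" by (rule code_dist)
    show "sset k \<subseteq> Pow {..<dd k}" by (rule sset_sub)
    show "connected_on {e \<in> cube_edges (dd k). e \<inter> sset k \<noteq> {}} (Pow {..<dd k} - {z})"
      using step.IH[of z] by (simp add: Ek_def)
  qed
  have k0: "k \<noteq> 0" using step.hyps by simp
  have "SS = sset (Suc k)" using k0 by (simp add: SS_def S0_def dd_Suc)
  then have "EE = Ek (Suc k)" by (simp add: EE_def Ek_def dd_Suc)
  moreover have "WW = Pow {..<dd (Suc k)} - {z}" by (simp add: WW_def dd_Suc)
  ultimately show ?case using main by simp
qed



lemma code_in_S0: "code k \<subseteq> S0 k"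
proof
  fix c assume c: "c \<in> code k"
  have s: "c \<subseteq> {..<dd k}" using c code_sub by blast
  then have "c \<subseteq> {..<dd (Suc k)}" by (auto simp: dd_Suc)
  moreover have "vv (dd k) c = c" by (rule vv_low[OF s])
  ultimately show "c \<in> S0 k" using c by (simp add: S0_def)
qed

lemma card_S0: "card (S0 k) \<le> 2 ^ Suc (dd k) * card (code k)"
proof -
  define m where "m = dd k"
  have D: "dd (Suc k) = Suc (2*m)" by (simp add: m_def dd_Suc)
  define f where "f A = (A \<inter> {..<m}, vv m A, m \<in> A)" for A
  have inj: "inj_on f (S0 k)"
  proof (rule inj_onI)
    fix A B assume A: "A \<in> S0 k" and B: "B \<in> S0 k" and e: "f A = f B"
    have a: "A \<subseteq> {..<Suc (2*m)}" "B \<subseteq> {..<Suc (2*m)}" using A B D by (auto simp: S0_def)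
    have x: "A \<inter> {..<m} = B \<inter> {..<m}" "vv m A = vv m B" "(m \<in> A) = (m \<in> B)"
      using e by (auto simp: f_def)
    show "A = B" by (rule determ[OF a x])
  qed
  have img: "f ` S0 k \<subseteq> Pow {..<m} \<times> code k \<times> (UNIV :: bool set)"
    by (auto simp: f_def S0_def m_def)
  have "card (S0 k) \<le> card (Pow {..<m} \<times> code k \<times> (UNIV :: bool set))"
    using card_inj_on_le[OF inj img] finite_code by (simp add: finite_cartesian_product)
  also have "\<dots> = 2^m * (card (code k) * 2)" by (simp add: card_cartesian_product card_Pow)
  finally show ?thesis by (simp add: m_def)
qed

lemma card_S0_diff: "card (S0 k - code (Suc k)) \<le> 2 ^ dd k * card (code k)"
proof -
  define m where "m = dd k"
  have D: "dd (Suc k) = Suc (2*m)" by (simp add: m_def dd_Suc)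
  define f where "f A = (A \<inter> {..<m}, vv m A)" for A
  have inj: "inj_on f (S0 k - code (Suc k))"
  proof (rule inj_onI)
    fix A B assume A: "A \<in> S0 k - code (Suc k)" and B: "B \<in> S0 k - code (Suc k)" and e: "f A = f B"
    have a: "A \<subseteq> {..<Suc (2*m)}" "B \<subseteq> {..<Suc (2*m)}" using A B D by (auto simp: S0_def)
    have pa: "(m \<in> A) \<longleftrightarrow> \<not> odd (card (yy m A))" using A by (auto simp: S0_def m_def)
    have pb: "(m \<in> B) \<longleftrightarrow> \<not> odd (card (yy m B))" using B by (auto simp: S0_def m_def)
    have x: "A \<inter> {..<m} = B \<inter> {..<m}" "vv m A = vv m B" using e by (auto simp: f_def)
    have "yy m A = yy m B" using x yy_eq by metis
    then have "(m \<in> A) = (m \<in> B)" using pa pb by simp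
    then show "A = B" using determ[OF a x] by simp
  qed
  have img: "f ` (S0 k - code (Suc k)) \<subseteq> Pow {..<m} \<times> code k"
    by (auto simp: f_def S0_def m_def)
  have "card (S0 k - code (Suc k)) \<le> card (Pow {..<m} \<times> code k)"
    using card_inj_on_le[OF inj img] finite_code by (simp add: finite_cartesian_product)
  also have "\<dots> = 2^m * card (code k)" by (simp add: card_cartesian_product card_Pow)
  finally show ?thesis by (simp add: m_def)
qed


lemma finite_sset: "finite (sset k)"
  using sset_sub finite_subset by (metis finite_Pow_iff finite_lessThan)

lemma dd_ge3: "2 \<le> k \<Longrightarrow> 3 \<le> dd k"
proof -
  assume "2 \<le> k"
  then have "dd 2 \<le> dd k" by (rule dd_mono)
  moreover have "dd 2 = 3" by (simp add: dd_def)
  ultimately show ?thesis by simp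
qed

lemma a_step: "1 \<le> k \<Longrightarrow> card (sset (Suc k) - code (Suc k)) \<le> 2 ^ (dd (Suc k) - Suc k) + card (sset k - code k)"
proof -
  assume k: "1 \<le> k"
  have sub: "sset (Suc k) - code (Suc k) \<subseteq> (S0 k - code (Suc k)) \<union> (sset k - code k)"
  proof
    fix A assume A: "A \<in> sset (Suc k) - code (Suc k)"
    have "sset (Suc k) = S0 k \<union> sset k" using k by simp
    then show "A \<in> (S0 k - code (Suc k)) \<union> (sset k - code k)" using A code_mono[of k] by blast
  qed
  have fin: "finite (S0 k - code (Suc k))" "finite (sset k - code k)"
    using finite_sset card_S0 by (auto simp: S0_def)
  have "card (sset (Suc k) - code (Suc k)) \<le> card ((S0 k - code (Suc k)) \<union> (sset k - code k))"
    using card_mono[OF _ sub] fin by simp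
  also have "\<dots> \<le> card (S0 k - code (Suc k)) + card (sset k - code k)" by (rule card_Un_le)
  finally have c1: "card (sset (Suc k) - code (Suc k)) \<le> card (S0 k - code (Suc k)) + card (sset k - code k)" .
  have "card (S0 k - code (Suc k)) \<le> 2 ^ (dd (Suc k) - Suc k)"
  proof -
    have "card (S0 k - code (Suc k)) \<le> 2 ^ dd k * 2 ^ (dd k - k)"
      using card_S0_diff[of k] card_code[of k] by (meson mult_le_mono2 order_trans)
    also have "\<dots> = 2 ^ (dd (Suc k) - Suc k)"
    proof -
      have "dd k + (dd k - k) = dd (Suc k) - Suc k" using dd_ge[of k] by (simp add: dd_Suc)
      then show ?thesis by (metis power_add)
    qed
    finally show ?thesis .
  qed
  then show ?thesis using c1 by simp
qed

lemma a_bound: "1 \<le> k \<Longrightarrow> 7 * card (sset k - code k) \<le> 8 * 2 ^ (dd k - k)"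
proof (induction k rule: dec_induct)
  case base
  have "sset 1 - code 1 = {}" using code_empty[of 1] by simp
  then show ?case by simp
next
  case (step k)
  have "7 * card (sset k - code k) \<le> 2 ^ (dd (Suc k) - Suc k)"
  proof (cases "k = 1")
    case True
    have "sset 1 - code 1 = {}" using code_empty[of 1] by simp
    then show ?thesis using True by simp
  next
    case False
    then have k2: "2 \<le> k" using step.hyps(1) by simp
    have "(8::nat) * 2 ^ (dd k - k) = 2 ^ (3 + (dd k - k))" by (simp add: power_add)
    also have "\<dots> \<le> 2 ^ (dd (Suc k) - Suc k)"
    proof (rule power_increasing)
      show "3 + (dd k - k) \<le> dd (Suc k) - Suc k" using dd_ge3[OF k2] dd_ge[of k] by (simp add: dd_Suc)
    qed simp
    finally show ?thesis using step.IH by simp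
  qed
  then show ?case using a_step[OF step.hyps(1)] by simp
qed



theorem theorem4p4:
  fixes l d :: nat
  assumes "l \<ge> 2" and "d = 2 ^ l - 1"
  shows "\<exists>E. spanning_subgraph_of_cube d (cube_verts d) E \<and> two_connected (cube_verts d) E \<and>
           real (tvc (cube_verts d) E) \<le> 2 * (2 ^ (d - l) + 2 powr (real d / 2 - real l))"
proof -
  obtain k where k: "l = Suc k" "1 \<le> k" using assms(1) by (cases l) auto
  have dl: "d = dd l" using assms(2) by (simp add: dd_def)
  define m where "m = dd k"
  have dm: "d = Suc (2*m)" using dl k by (simp add: dd_Suc m_def)
  have km: "k \<le> m" using dd_ge[of k] by (simp add: m_def)
  have d3: "3 \<le> d" using dd_ge3[of l] assms(1) dl by simp
  let ?V = "cube_verts d" and ?E = "Ek l" and ?S = "sset l"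
  have sS: "sset l = S0 k \<union> sset k" using k by simp
  have S0sub: "S0 k \<subseteq> ?S" using sS by blast
  have span: "spanning_subgraph_of_cube d ?V ?E"
    unfolding spanning_subgraph_of_cube_def Ek_def using dl by auto
  have tc: "two_connected ?V ?E"
    unfolding two_connected_def
  proof (intro conjI ballI)
    show "finite ?V" by (simp add: cube_verts_def)
    have "card ?V = 2 ^ d" by (simp add: cube_verts_def card_Pow)
    moreover have "(2::nat) ^ 3 \<le> 2 ^ d" using d3 by (rule power_increasing) simp
    ultimately show "3 \<le> card ?V" by simp
    have "?V - {{d}} = ?V" by (auto simp: cube_verts_def)
    then show "connected_on ?E ?V" using icp_all[OF _, of l "{d}"] k dl
      by (simp add: cube_verts_def)
    fix v assume "v \<in> ?V"
    show "connected_on ?E (?V - {v})" using icp_all[of l v] k dl by (simp add: cube_verts_def)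
  qed
  have istvc: "is_tvc ?V ?E ?S"
    unfolding is_tvc_def
  proof (intro conjI ballI)
    show "?S \<subseteq> ?V" using sset_sub[of l] dl by (simp add: cube_verts_def)
    fix e assume "e \<in> ?E" then show "e \<inter> ?S \<noteq> {}" by (simp add: Ek_def)
  next
    fix A assume A: "A \<in> ?V"
    have As: "A \<subseteq> {..<d}" using A by (simp add: cube_verts_def)
    have inS: "B \<in> ?S" if "B \<subseteq> {..<d}" "vv m B \<in> code k" for B
      using that S0sub dl k by (auto simp: S0_def m_def)
    have edge: "{A, flip A j} \<in> ?E" if "j < d" "vv m (flip A j) \<in> code k" for j
    proof -
      have "{A, flip A j} \<in> cube_edges d" by (rule cube_edge_flip[OF As that(1)])
      moreover have "flip A j \<in> ?S" using inS[OF flip_sub[OF As that(1)] that(2)] .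
      ultimately show ?thesis using dl by (auto simp: Ek_def)
    qed
    show "\<exists>u\<in>?S. {A, u} \<in> ?E \<and> u \<noteq> A"
    proof (cases "vv m A \<in> code k")
      case True
      have md: "m < d" using dm by simp
      have "vv m (flip A m) \<in> code k" using True vv_flip_mid by simp
      then show ?thesis using edge[OF md] inS[OF flip_sub[OF As md]] by auto
    next
      case False
      obtain c where c: "c \<in> code k" "card (sd (vv m A) c) \<le> 1"
        using code_cover[of "vv m A" k] vv_sub m_def by blast
      have cs: "c \<subseteq> {..<m}" using c(1) code_sub m_def by blast
      have fin: "finite (sd (vv m A) c)" using cs vv_sub finite_sd finite_subset by (metis finite_lessThan)
      have "vv m A \<noteq> c" using False c by blast
      then have "sd (vv m A) c \<noteq> {}" using sd_empty_iff by metis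
      then have "card (sd (vv m A) c) = 1" using c(2) fin by (simp add: le_Suc_eq)
      then obtain i where i: "c = flip (vv m A) i" using card1_sd by blast
      have im: "i < m"
      proof -
        have "i \<in> sd (vv m A) c" using i by simp
        then show ?thesis using vv_sub[of m A] cs by auto
      qed
      have id: "i < d" using im dm by simp
      have "vv m (flip A i) \<in> code k" using vv_flip_x[OF im] i c(1) by simp
      then show ?thesis using edge[OF id] inS[OF flip_sub[OF As id]] by auto
    qed
  qed
  have le: "tvc ?V ?E \<le> card ?S"
    unfolding tvc_def by (rule Least_le) (use istvc in blast)
  have cS: "card ?S \<le> 2 ^ (d - l + 1) + card (sset k - code k)"
  proof -
    have sub: "?S \<subseteq> S0 k \<union> (sset k - code k)" using sS code_in_S0[of k] by blast
    have fin: "finite (S0 k)" "finite (sset k - code k)"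
      using finite_sset by (auto simp: S0_def)
    have "card ?S \<le> card (S0 k \<union> (sset k - code k))" using card_mono[OF _ sub] fin by simp
    also have "\<dots> \<le> card (S0 k) + card (sset k - code k)" by (rule card_Un_le)
    also have "card (S0 k) \<le> 2 ^ (d - l + 1)"
    proof -
      have "card (S0 k) \<le> 2 ^ Suc m * 2 ^ (m - k)"
        using card_S0[of k] card_code[of k] m_def by (meson mult_le_mono2 order_trans)
      also have "\<dots> = 2 ^ (d - l + 1)"
      proof -
        have "Suc m + (m - k) = d - l + 1" using dm k km by simp
        then show ?thesis by (metis power_add)
      qed
      finally show ?thesis .
    qed
    finally show ?thesis by simp
  qed
  have ab: "7 * card (sset k - code k) \<le> 8 * 2 ^ (m - k)" using a_bound[OF k(2)] m_def by simp
  define a where "a = card (sset k - code k)"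
  define t :: real where "t = 2 ^ (m - k)"
  have tpos: "t > 0" by (simp add: t_def)
  have n1: "tvc ?V ?E \<le> 2 ^ (d - l + 1) + a" using le cS a_def by linarith
  have "real (tvc ?V ?E) \<le> real (2 ^ (d - l + 1) + a)" using n1 by (simp only: of_nat_le_iff)
  then have r1: "real (tvc ?V ?E) \<le> 2 ^ (d - l + 1) + real a" by simp
  have r2: "7 * real a \<le> 8 * t" using ab a_def t_def
    by (metis of_nat_le_iff of_nat_mult of_nat_numeral of_nat_power)
  have sq: "8 / 7 \<le> sqrt (2::real)"
    by (rule real_le_rsqrt) (simp add: power2_eq_square)
  have e1: "2 * (2::real) ^ (d - l) = 2 ^ (d - l + 1)" by simp
  have e2: "2 * (2::real) powr (real d / 2 - real l) = t * sqrt 2"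
  proof -
    have x: "real d / 2 - real l + 1 = real (m - k) + 1/2"
      using dm k km by (simp add: of_nat_diff)
    have "2 * (2::real) powr (real d / 2 - real l) = 2 powr (real d / 2 - real l + 1)"
      by (simp add: powr_add)
    also have "\<dots> = 2 powr real (m - k) * 2 powr (1/2)" using x by (simp add: powr_add)
    also have "\<dots> = t * sqrt 2" by (simp add: t_def powr_realpow powr_half_sqrt)
    finally show ?thesis .
  qed
  have "real a \<le> t * sqrt 2"
  proof -
    have "real a \<le> 8 / 7 * t" using r2 by simp
    also have "\<dots> \<le> sqrt 2 * t" using sq tpos by (intro mult_right_mono) auto
    finally show ?thesis by (simp add: mult.commute)
  qed
  moreover have rhs: "2 * ((2::real) ^ (d - l) + 2 powr (real d / 2 - real l)) = 2 ^ (d - l + 1) + t * sqrt 2"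
    by (subst distrib_left) (simp only: e1 e2)
  ultimately have "real (tvc ?V ?E) \<le> 2 * (2 ^ (d - l) + 2 powr (real d / 2 - real l))"
    using r1 by linarith
  then show ?thesis using span tc by blast
qed


end
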